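(* Let $S$ be a $0$-left cancellative semigroup which is categorical at zero, let $r\in S$, and let $\sigma$ be a maximal string with $\sigma\cap rS\neq\emptyset$. Then $r^{-1}*\sigma=\{t\in S: rt\in\sigma\}$ is a maximal string.
   Context: $S$ has zero $0$; $0$-left cancellative: $st=sr\neq0\Rightarrow t=r$; categorical at zero: $rs\neq0$ and $st\neq0$ imply $rst\neq0$. Let $\tilde S=S\cup\{1\}$ with $1$ an adjoined identity; for $s,t\in S$, $s\mid t$ means $t\in s\tilde S$. A string is a nonempty $\sigma\subseteq S$ such that (i) $0\notin\sigma$; (ii) if $s\mid t$ and $t\in\sigma$ then $s\in\sigma$; (iii) for all $s_1,s_2\in\sigma$ there is $s\in\sigma$ with $s_1\mid s$ and $s_2\mid s$. A string is maximal if it is not properly contained in another string. *)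

theory Defs
  imports Main
begin

text \<open>A semigroup S (the carrier is the whole type 'a, with multiplication of class
semigroup_mult) together with a zero element z.\<close>

definition is_zero :: "'a::semigroup_mult \<Rightarrow> bool" where
  "is_zero z \<longleftrightarrow> (\<forall>s. z * s = z \<and> s * z = z)"

definition zero_left_cancellative :: "'a::semigroup_mult \<Rightarrow> bool" where
  "zero_left_cancellative z \<longleftrightarrow> (\<forall>s t r. s * t = s * r \<and> s * t \<noteq> z \<longrightarrow> t = r)"

definition categorical_at_zero :: "'a::semigroup_mult \<Rightarrow> bool" where
  "categorical_at_zero z \<longleftrightarrow> (\<forall>r s t. r * s \<noteq> z \<and> s * t \<noteq> z \<longrightarrow> r * s * t \<noteq> z)"

text \<open>s divides t: t lies in s S~, with S~ = S with an adjoined identity.\<close>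
definition sdvd :: "'a::semigroup_mult \<Rightarrow> 'a \<Rightarrow> bool" where
  "sdvd s t \<longleftrightarrow> t = s \<or> (\<exists>u. t = s * u)"

definition is_string :: "'a::semigroup_mult \<Rightarrow> 'a set \<Rightarrow> bool" where
  "is_string z \<sigma> \<longleftrightarrow> \<sigma> \<noteq> {} \<and> z \<notin> \<sigma>
     \<and> (\<forall>s t. sdvd s t \<and> t \<in> \<sigma> \<longrightarrow> s \<in> \<sigma>)
     \<and> (\<forall>s1\<in>\<sigma>. \<forall>s2\<in>\<sigma>. \<exists>s\<in>\<sigma>. sdvd s1 s \<and> sdvd s2 s)"

definition is_maximal_string :: "'a::semigroup_mult \<Rightarrow> 'a set \<Rightarrow> bool" where
  "is_maximal_string z \<sigma> \<longleftrightarrow> is_string z \<sigma> \<and> (\<forall>\<tau>. is_string z \<tau> \<and> \<sigma> \<subseteq> \<tau> \<longrightarrow> \<tau> = \<sigma>)"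

end

theory Submission
  imports Defs
begin

lemma sdvd_trans: "sdvd (a::'a::semigroup_mult) b \<Longrightarrow> sdvd b c \<Longrightarrow> sdvd a c"
  unfolding sdvd_def by (metis mult.assoc)

lemma sdvd_refl: "sdvd a a" unfolding sdvd_def by simp

lemma sdvd_mult: "sdvd (a::'a::semigroup_mult) b \<Longrightarrow> sdvd (r*a) (r*b)"
  unfolding sdvd_def by (metis mult.assoc)

lemma sdvd_r: "sdvd (r*s0::'a::semigroup_mult) y \<Longrightarrow> \<exists>t. y = r*t \<and> sdvd s0 t"
  unfolding sdvd_def by (metis mult.assoc)

theorem proposition10p20:
  fixes z r :: "'a::semigroup_mult" and \<sigma> :: "'a set"
  assumes "is_zero z"
    and "zero_left_cancellative z"
    and "categorical_at_zero z"
    and "is_maximal_string z \<sigma>"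
    and "\<sigma> \<inter> {r * s | s. True} \<noteq> {}"
  shows "is_maximal_string z {t. r * t \<in> \<sigma>}"
proof -
  have Z: "\<And>s. z * s = z" "\<And>s. s * z = z" using assms(1) unfolding is_zero_def by auto
  have LC: "\<And>s t u. s * t = s * u \<Longrightarrow> s * t \<noteq> z \<Longrightarrow> t = u"
    using assms(2) unfolding zero_left_cancellative_def by blast
  have CAT: "\<And>a b c. a * b \<noteq> z \<Longrightarrow> b * c \<noteq> z \<Longrightarrow> a * b * c \<noteq> z"
    using assms(3) unfolding categorical_at_zero_def by blast
  have S: "is_string z \<sigma>" and MAX: "\<And>\<tau>. is_string z \<tau> \<Longrightarrow> \<sigma> \<subseteq> \<tau> \<Longrightarrow> \<tau> = \<sigma>"
    using assms(4) unfolding is_maximal_string_def by auto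
  have Sne: "z \<notin> \<sigma>" and Sh: "\<And>s t. sdvd s t \<Longrightarrow> t \<in> \<sigma> \<Longrightarrow> s \<in> \<sigma>"
    and Sd: "\<And>s1 s2. s1 \<in> \<sigma> \<Longrightarrow> s2 \<in> \<sigma> \<Longrightarrow> \<exists>s\<in>\<sigma>. sdvd s1 s \<and> sdvd s2 s"
    using S unfolding is_string_def by blast+
  obtain s0 where s0: "r * s0 \<in> \<sigma>" using assms(5) by blast
  define \<tau> where "\<tau> = {t. r * t \<in> \<sigma>}"
  have str: "is_string z \<tau>"
    unfolding is_string_def
  proof (intro conjI allI impI ballI)
    show "\<tau> \<noteq> {}" using s0 \<tau>_def by blast
    show "z \<notin> \<tau>" using Sne Z \<tau>_def by simp
    fix s t assume a: "sdvd s t \<and> t \<in> \<tau>"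
    thus "s \<in> \<tau>" using Sh[OF sdvd_mult] \<tau>_def by blast
  next
    fix t1 t2 assume t1: "t1 \<in> \<tau>" and t2: "t2 \<in> \<tau>"
    obtain s where s: "s \<in> \<sigma>" "sdvd (r*t1) s" "sdvd (r*t2) s"
      using Sd t1 t2 \<tau>_def by blast
    obtain t where t: "s = r*t" "sdvd t1 t" using sdvd_r[OF s(2)] by blast
    obtain t' where t': "s = r*t'" "sdvd t2 t'" using sdvd_r[OF s(3)] by blast
    have "t = t'" using LC[of r t t'] t t' s(1) Sne by auto
    thus "\<exists>s\<in>\<tau>. sdvd t1 s \<and> sdvd t2 s" using t t' s(1) \<tau>_def by blast
  qed
  have "\<tau>' = \<tau>" if T: "is_string z \<tau>'" "\<tau> \<subseteq> \<tau>'" for \<tau>'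
  proof -
    have Tne: "z \<notin> \<tau>'" and Th: "\<And>s t. sdvd s t \<Longrightarrow> t \<in> \<tau>' \<Longrightarrow> s \<in> \<tau>'"
      and Td: "\<And>s1 s2. s1 \<in> \<tau>' \<Longrightarrow> s2 \<in> \<tau>' \<Longrightarrow> \<exists>s\<in>\<tau>'. sdvd s1 s \<and> sdvd s2 s"
      using T(1) unfolding is_string_def by blast+
    have s0T: "s0 \<in> \<tau>'" using s0 T(2) \<tau>_def by blast
    have nz: "r * t \<noteq> z" if tT: "t \<in> \<tau>'" for t
    proof -
      obtain u where u: "u \<in> \<tau>'" "sdvd t u" "sdvd s0 u" using Td[OF tT s0T] by blast
      have r0: "r * s0 \<noteq> z" using s0 Sne by auto
      have ru: "r * u \<noteq> z"
      proof (cases "u = s0")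
        case True thus ?thesis using r0 by simp
      next
        case False
        then obtain v where v: "u = s0 * v" using u(3) unfolding sdvd_def by blast
        have "s0 * v \<noteq> z" using u(1) Tne v by auto
        from CAT[OF r0 this] show ?thesis using v by (simp add: mult.assoc)
      qed
      show ?thesis
      proof (cases "u = t")
        case True thus ?thesis using ru by simp
      next
        case False
        then obtain v where v: "u = t * v" using u(2) unfolding sdvd_def by blast
        show ?thesis using ru v Z by (metis mult.assoc)
      qed
    qed
    define \<sigma>' where "\<sigma>' = {x. \<exists>t\<in>\<tau>'. sdvd x (r*t)}"
    have sub: "\<sigma> \<subseteq> \<sigma>'"
    proof
      fix x assume x: "x \<in> \<sigma>"
      obtain y where y: "y \<in> \<sigma>" "sdvd x y" "sdvd (r*s0) y" using Sd[OF x s0] by blast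
      obtain t where t: "y = r*t" "sdvd s0 t" using sdvd_r[OF y(3)] by blast
      have "t \<in> \<tau>'" using y(1) t(1) T(2) \<tau>_def by blast
      thus "x \<in> \<sigma>'" using y(2) t(1) \<sigma>'_def by blast
    qed
    have str': "is_string z \<sigma>'"
      unfolding is_string_def
    proof (intro conjI allI impI ballI)
      show "\<sigma>' \<noteq> {}" using sub s0 by blast
      show "z \<notin> \<sigma>'"
      proof
        assume "z \<in> \<sigma>'"
        then obtain t where t: "t \<in> \<tau>'" "sdvd z (r*t)" using \<sigma>'_def by blast
        hence "r*t = z" using Z unfolding sdvd_def by auto
        thus False using nz t(1) by blast
      qed
      fix s t assume "sdvd s t \<and> t \<in> \<sigma>'"
      thus "s \<in> \<sigma>'" using sdvd_trans \<sigma>'_def by blast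
    next
      fix x1 x2 assume x1: "x1 \<in> \<sigma>'" and x2: "x2 \<in> \<sigma>'"
      obtain t1 where t1: "t1 \<in> \<tau>'" "sdvd x1 (r*t1)" using x1 \<sigma>'_def by blast
      obtain t2 where t2: "t2 \<in> \<tau>'" "sdvd x2 (r*t2)" using x2 \<sigma>'_def by blast
      obtain u where u: "u \<in> \<tau>'" "sdvd t1 u" "sdvd t2 u" using Td[OF t1(1) t2(1)] by blast
      have "r*u \<in> \<sigma>'" using u(1) sdvd_refl \<sigma>'_def by blast
      moreover have "sdvd x1 (r*u)" using sdvd_trans[OF t1(2) sdvd_mult[OF u(2)]] .
      moreover have "sdvd x2 (r*u)" using sdvd_trans[OF t2(2) sdvd_mult[OF u(3)]] .
      ultimately show "\<exists>s\<in>\<sigma>'. sdvd x1 s \<and> sdvd x2 s" by blast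
    qed
    have eq: "\<sigma>' = \<sigma>" using MAX[OF str' sub] .
    have "\<tau>' \<subseteq> \<tau>"
    proof
      fix t assume "t \<in> \<tau>'"
      hence "r*t \<in> \<sigma>'" using sdvd_refl \<sigma>'_def by blast
      thus "t \<in> \<tau>" using eq \<tau>_def by simp
    qed
    thus ?thesis using T(2) by blast
  qed
  thus ?thesis using str unfolding is_maximal_string_def \<tau>_def by blast
qed

end
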